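(* Let $d\ge 3$ and let $\mathbf X=(X_1,\dots,X_d)$ be a random vector of real-valued random variables on an atomless probability space (no integrability assumed), at least $3$ of whose components are non-degenerate. If a counter-monotonic version $\mathbf X^{\rm ct}$ of $\mathbf X$ exists, then $\mathbf X^{\rm ct}\le_{\rm sm}\mathbf X$.
   Context: A function $\varphi:\mathbb R^d\to\mathbb R$ is supermodular if $\varphi(\mathbf x)+\varphi(\mathbf y)\le\varphi(\mathbf x\wedge\mathbf y)+\varphi(\mathbf x\vee\mathbf y)$ for all $\mathbf x,\mathbf y\in\mathbb R^d$, where $\wedge,\vee$ are componentwise minimum and maximum. An expectation $\mathbb E[V]$ is well-defined if $\mathbb E[\max\{V,0\}]<\infty$ or $\mathbb E[\max\{-V,0\}]<\infty$. For random vectors $\mathbf X,\mathbf Y$ in $\mathbb R^d$, $\mathbf X\le_{\rm sm}\mathbf Y$ means $\mathbb E[\varphi(\mathbf X)]\le\mathbb E[\varphi(\mathbf Y)]$ for all supermodular $\varphi$ such that both expectations are well-defined. A pair $(X,Y)$ is comonotonic if $X=f(Z)$, $Y=g(Z)$ a.s. for some random variable $Z$ and increasing $f,g$, and counter-monotonic if $(X,-Y)$ is comonotonic; a random vector is counter-monotonic if each pair of its components is. A counter-monotonic version of $\mathbf X$ is a counter-monotonic random vector with the same marginal distributions as $\mathbf X$. *)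

theory Defs
  imports "HOL-Probability.Probability"
begin

definition atomless :: "'a measure \<Rightarrow> bool" where
  "atomless M \<longleftrightarrow> (\<forall>A\<in>sets M. 0 < emeasure M A \<longrightarrow>
     (\<exists>B\<in>sets M. B \<subseteq> A \<and> 0 < emeasure M B \<and> emeasure M B < emeasure M A))"

definition nondegenerate :: "'a measure \<Rightarrow> ('a \<Rightarrow> real) \<Rightarrow> bool" where
  "nondegenerate M V \<longleftrightarrow> \<not> (\<exists>c. AE \<omega> in M. V \<omega> = c)"

text \<open>Supermodular function on R^d (vectors indexed by a finite type 'd);
  inf / sup on functions are the componentwise minimum / maximum.\<close>
definition supermodular :: "(('d \<Rightarrow> real) \<Rightarrow> real) \<Rightarrow> bool" where
  "supermodular \<phi> \<longleftrightarrow> (\<forall>x y. \<phi> x + \<phi> y \<le> \<phi> (inf x y) + \<phi> (sup x y))"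

definition exp_well_defined :: "'a measure \<Rightarrow> ('a \<Rightarrow> real) \<Rightarrow> bool" where
  "exp_well_defined M V \<longleftrightarrow>
     (\<integral>\<^sup>+\<omega>. ennreal (max (V \<omega>) 0) \<partial>M) < \<infinity> \<or> (\<integral>\<^sup>+\<omega>. ennreal (max (- V \<omega>) 0) \<partial>M) < \<infinity>"

text \<open>Extended-real expectation E[V] = E[max(V,0)] - E[max(-V,0)]
  (meaningful when well-defined).\<close>
definition ext_expectation :: "'a measure \<Rightarrow> ('a \<Rightarrow> real) \<Rightarrow> ereal" where
  "ext_expectation M V =
     enn2ereal (\<integral>\<^sup>+\<omega>. ennreal (max (V \<omega>) 0) \<partial>M) - enn2ereal (\<integral>\<^sup>+\<omega>. ennreal (max (- V \<omega>) 0) \<partial>M)"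

definition comonotonic :: "'a measure \<Rightarrow> ('a \<Rightarrow> real) \<Rightarrow> ('a \<Rightarrow> real) \<Rightarrow> bool" where
  "comonotonic M X Y \<longleftrightarrow> (\<exists>(Z::'a \<Rightarrow> real) (f::real \<Rightarrow> real) (g::real \<Rightarrow> real).
     Z \<in> borel_measurable M \<and> mono f \<and> mono g \<and> (AE \<omega> in M. X \<omega> = f (Z \<omega>) \<and> Y \<omega> = g (Z \<omega>)))"

definition counter_monotonic_pair :: "'a measure \<Rightarrow> ('a \<Rightarrow> real) \<Rightarrow> ('a \<Rightarrow> real) \<Rightarrow> bool" where
  "counter_monotonic_pair M X Y \<longleftrightarrow> comonotonic M X (\<lambda>\<omega>. - Y \<omega>)"

definition counter_monotonic :: "'a measure \<Rightarrow> ('d \<Rightarrow> 'a \<Rightarrow> real) \<Rightarrow> bool" where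
  "counter_monotonic M Y \<longleftrightarrow> (\<forall>i j. i \<noteq> j \<longrightarrow> counter_monotonic_pair M (Y i) (Y j))"

definition counter_monotonic_version :: "'a measure \<Rightarrow> ('d \<Rightarrow> 'a \<Rightarrow> real) \<Rightarrow> ('d \<Rightarrow> 'a \<Rightarrow> real) \<Rightarrow> bool" where
  "counter_monotonic_version M Y X \<longleftrightarrow>
     (\<forall>i. Y i \<in> borel_measurable M) \<and> counter_monotonic M Y \<and>
     (\<forall>i. distr M borel (Y i) = distr M borel (X i))"

definition sm_le :: "'a measure \<Rightarrow> ('d::finite \<Rightarrow> 'a \<Rightarrow> real) \<Rightarrow> ('d \<Rightarrow> 'a \<Rightarrow> real) \<Rightarrow> bool" where
  "sm_le M X Y \<longleftrightarrow> (\<forall>\<phi> :: ('d \<Rightarrow> real) \<Rightarrow> real.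
     supermodular \<phi> \<and> \<phi> \<in> borel_measurable borel \<and>
     exp_well_defined M (\<lambda>\<omega>. \<phi> (\<lambda>i. X i \<omega>)) \<and> exp_well_defined M (\<lambda>\<omega>. \<phi> (\<lambda>i. Y i \<omega>)) \<longrightarrow>
     ext_expectation M (\<lambda>\<omega>. \<phi> (\<lambda>i. X i \<omega>)) \<le> ext_expectation M (\<lambda>\<omega>. \<phi> (\<lambda>i. Y i \<omega>)))"

end

theory Submission
  imports Defs
begin

lemma ext_mono:
  assumes "AE \<omega> in M. f \<omega> \<le> g \<omega>"
  shows "ext_expectation M f \<le> ext_expectation M g"
proof -
  have 1: "(\<integral>\<^sup>+\<omega>. ennreal (max (f \<omega>) 0) \<partial>M) \<le> (\<integral>\<^sup>+\<omega>. ennreal (max (g \<omega>) 0) \<partial>M)"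
    by (rule nn_integral_mono_AE) (use assms in \<open>auto elim!: eventually_mono intro!: ennreal_leI\<close>)
  have 2: "(\<integral>\<^sup>+\<omega>. ennreal (max (- g \<omega>) 0) \<partial>M) \<le> (\<integral>\<^sup>+\<omega>. ennreal (max (- f \<omega>) 0) \<partial>M)"
    by (rule nn_integral_mono_AE) (use assms in \<open>auto elim!: eventually_mono intro!: ennreal_leI\<close>)
  show ?thesis unfolding ext_expectation_def
    by (rule ereal_minus_mono) (use 1 2 in \<open>simp_all only: less_eq_ennreal.rep_eq\<close>)
qed

lemma ext_cong_AE:
  assumes "AE \<omega> in M. f \<omega> = g \<omega>"
  shows "ext_expectation M f = ext_expectation M g"
  using assms by (intro antisym ext_mono) (auto elim!: eventually_mono)

lemma ext_diff:
  fixes F :: "'a \<Rightarrow> real" and G H :: "'a \<Rightarrow> ennreal"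
  assumes F: "F \<in> borel_measurable M" and G: "G \<in> borel_measurable M" and H: "H \<in> borel_measurable M"
    and eq: "\<And>\<omega>. \<omega> \<in> space M \<Longrightarrow> ennreal (max (F \<omega>) 0) + H \<omega> = G \<omega> + ennreal (max (- F \<omega>) 0)"
    and le: "\<And>\<omega>. \<omega> \<in> space M \<Longrightarrow> ennreal (max (- F \<omega>) 0) \<le> H \<omega>"
    and fin: "(\<integral>\<^sup>+\<omega>. H \<omega> \<partial>M) < \<infinity>"
  shows "ext_expectation M F = enn2ereal (\<integral>\<^sup>+\<omega>. G \<omega> \<partial>M) - enn2ereal (\<integral>\<^sup>+\<omega>. H \<omega> \<partial>M)"
proof -
  define A where "A = (\<integral>\<^sup>+\<omega>. ennreal (max (F \<omega>) 0) \<partial>M)"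
  define B where "B = (\<integral>\<^sup>+\<omega>. ennreal (max (- F \<omega>) 0) \<partial>M)"
  define GG where "GG = (\<integral>\<^sup>+\<omega>. G \<omega> \<partial>M)"
  define HH where "HH = (\<integral>\<^sup>+\<omega>. H \<omega> \<partial>M)"
  have "A + HH = (\<integral>\<^sup>+\<omega>. ennreal (max (F \<omega>) 0) + H \<omega> \<partial>M)"
    unfolding A_def HH_def using F H by (subst nn_integral_add) auto
  also have "\<dots> = (\<integral>\<^sup>+\<omega>. G \<omega> + ennreal (max (- F \<omega>) 0) \<partial>M)"
    by (rule nn_integral_cong) (use eq in auto)
  also have "\<dots> = GG + B"
    unfolding GG_def B_def using F G by (subst nn_integral_add) auto
  finally have e: "A + HH = GG + B" .
  have "B \<le> HH" unfolding B_def HH_def by (rule nn_integral_mono) (use le in auto)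
  then have Bf: "B < \<infinity>" using fin HH_def by auto
  have Hf: "HH < \<infinity>" using fin HH_def by auto
  obtain b where b: "B = ennreal b" "0 \<le> b" using Bf by (cases B) (auto simp: infinity_ennreal_def)
  obtain h where h: "HH = ennreal h" "0 \<le> h" using Hf by (cases HH) (auto simp: infinity_ennreal_def)
  have e2: "enn2ereal A + ereal h = enn2ereal GG + ereal b"
    using arg_cong[OF e, of enn2ereal] b h by (simp add: plus_ennreal.rep_eq)
  have "enn2ereal A - ereal b = enn2ereal GG - ereal h"
    using e2 by (cases "enn2ereal A"; cases "enn2ereal GG") auto
  then show ?thesis unfolding ext_expectation_def A_def[symmetric] B_def[symmetric] GG_def[symmetric] HH_def[symmetric]
    using b h by simp
qed

lemma sm_sum_gen:
  fixes \<phi> :: "('d \<Rightarrow> real) \<Rightarrow> real"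
  assumes sm: "supermodular \<phi>" and ord: "(\<forall>i. c i \<le> x i) \<or> (\<forall>i. x i \<le> c i)" and fin: "finite S"
  shows "\<phi> c + (\<Sum>i\<in>S. \<phi> (c(i := x i)) - \<phi> c) \<le> \<phi> (\<lambda>i. if i \<in> S then x i else c i)"
  using fin
proof (induction S rule: finite_induct)
  case empty
  then show ?case by simp
next
  case (insert j S)
  define z where "z = (\<lambda>i. if i \<in> S then x i else c i)"
  define w where "w = c(j := x j)"
  define n where "n = (\<lambda>i. if i \<in> insert j S then x i else c i)"
  have "(inf z w = c \<and> sup z w = n) \<or> (inf z w = n \<and> sup z w = c)"
  proof (cases "\<forall>i. c i \<le> x i")
    case True
    have "inf z w = c" unfolding z_def w_def using True[rule_format] insert(2) by (auto simp: fun_eq_iff inf_fun_def inf_min min_def intro: order.antisym)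
    moreover have "sup z w = n" unfolding z_def w_def n_def using True[rule_format] insert(2) by (auto simp: fun_eq_iff sup_fun_def sup_max max_def intro: order.antisym)
    ultimately show ?thesis by simp
  next
    case False
    then have F: "\<forall>i. x i \<le> c i" using ord by auto
    have "inf z w = n" unfolding z_def w_def n_def using F[rule_format] insert(2) by (auto simp: fun_eq_iff inf_fun_def inf_min min_def intro: order.antisym)
    moreover have "sup z w = c" unfolding z_def w_def using F[rule_format] insert(2) by (auto simp: fun_eq_iff sup_fun_def sup_max max_def intro: order.antisym)
    ultimately show ?thesis by simp
  qed
  then have "\<phi> z + \<phi> w \<le> \<phi> c + \<phi> n"
    using sm unfolding supermodular_def by (metis add.commute)
  moreover have "(\<Sum>i\<in>insert j S. \<phi> (c(i := x i)) - \<phi> c) = (\<phi> w - \<phi> c) + (\<Sum>i\<in>S. \<phi> (c(i := x i)) - \<phi> c)"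
    using insert(1,2) unfolding w_def by (rule sum.insert)
  ultimately show ?case using insert(3) unfolding z_def[symmetric] n_def[symmetric]
    by linarith
qed

lemma sm_sum:
  fixes \<phi> :: "('d::finite \<Rightarrow> real) \<Rightarrow> real"
  assumes sm: "supermodular \<phi>" and ord: "(\<forall>i. c i \<le> x i) \<or> (\<forall>i. x i \<le> c i)"
  shows "\<phi> c + (\<Sum>i\<in>UNIV. \<phi> (c(i := x i)) - \<phi> c) \<le> \<phi> x"
  using sm_sum_gen[OF sm ord, of UNIV] by simp

lemma one_coord_sum:
  fixes u :: "'d::finite \<Rightarrow> real \<Rightarrow> real"
  assumes one: "\<forall>l n. l \<noteq> n \<longrightarrow> x l = c l \<or> x n = c n"
    and u0: "\<And>i. u i (c i) = 0" and j: "x j \<noteq> c j"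
  shows "(\<Sum>i\<in>UNIV. u i (x i)) = u j (x j)"
proof -
  have "(\<Sum>i\<in>UNIV. u i (x i)) = u j (x j) + (\<Sum>i\<in>UNIV - {j}. u i (x i))"
    by (rule sum.remove) auto
  also have "(\<Sum>i\<in>UNIV - {j}. u i (x i)) = 0"
    using one j u0 by (intro sum.neutral) (metis DiffE insertI1)
  finally show ?thesis by simp
qed

lemma sm_eq:
  fixes \<phi> :: "('d::finite \<Rightarrow> real) \<Rightarrow> real"
  assumes one: "\<forall>l n. l \<noteq> n \<longrightarrow> x l = c l \<or> x n = c n"
  shows "\<phi> c + (\<Sum>i\<in>UNIV. \<phi> (c(i := x i)) - \<phi> c) = \<phi> x"
proof (cases "\<exists>j. x j \<noteq> c j")
  case True
  then obtain j where j: "x j \<noteq> c j" by auto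
  have "(\<Sum>i\<in>UNIV. \<phi> (c(i := x i)) - \<phi> c) = \<phi> (c(j := x j)) - \<phi> c"
    using one_coord_sum[OF one _ j, of "\<lambda>i t. \<phi> (c(i := t)) - \<phi> c"] by simp
  moreover have "c(j := x j) = x" by (rule ext) (metis fun_upd_apply one j)
  ultimately show ?thesis by simp
next
  case False
  then have "x = c" by auto
  then show ?thesis by simp
qed

lemma neg_bound:
  fixes u :: "'d::finite \<Rightarrow> real \<Rightarrow> real"
  assumes one: "\<forall>l n. l \<noteq> n \<longrightarrow> x l = c l \<or> x n = c n"
    and u0: "\<And>i. u i (c i) = 0"
  shows "max (- u i (x i)) 0 \<le> max (- (a + (\<Sum>l\<in>UNIV. u l (x l)))) 0 + \<bar>a\<bar>"
proof (cases "x i = c i")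
  case True
  then show ?thesis using u0 by simp
next
  case False
  then show ?thesis using one_coord_sum[of x c u i, OF one u0 False] by simp
qed

lemma mono_prod: "mono f \<Longrightarrow> mono g \<Longrightarrow> 0 \<le> ((f (x::real) - f y) * (g x - g y) :: real)"
  proof (cases "x \<le> y")
  assume m: "mono f" "mono g"
  case True
  then have "f x - f y \<le> 0" "g x - g y \<le> 0" using m by (auto dest: monoD)
  then show ?thesis by (rule mult_nonpos_nonpos)
next
  assume m: "mono f" "mono g"
  case False
  then have "y \<le> x" by simp
  then have "0 \<le> f x - f y" "0 \<le> g x - g y" using m by (auto dest: monoD)
  then show ?thesis by (rule mult_nonneg_nonneg)
qed

definition antiP :: "('d \<Rightarrow> real) set \<Rightarrow> bool" where
  "antiP R \<longleftrightarrow> (\<forall>p\<in>R. \<forall>q\<in>R. \<forall>i j. i \<noteq> j \<longrightarrow> (p i - q i) * (p j - q j) \<le> 0)"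

lemma antiD: "antiP R \<Longrightarrow> p \<in> R \<Longrightarrow> q \<in> R \<Longrightarrow> i \<noteq> j \<Longrightarrow> (p i - q i) * (p j - q j) \<le> 0"
  unfolding antiP_def by blast

lemma G1: assumes "antiP R" "x \<in> R" "s \<in> R" "l \<noteq> n" "x l < s l" "x n < s n" shows False
proof -
  have "(s l - x l) * (s n - x n) \<le> 0" using antiD[OF assms(1,3,2,4)] .
  moreover have "0 < (s l - x l) * (s n - x n)" using assms(5,6) by simp
  ultimately show False by simp
qed

lemma G2: assumes "antiP R" "x \<in> R" "s \<in> R" "s l < x l" "n \<noteq> l" shows "x n \<le> s n"
proof (rule ccontr)
  assume "\<not> x n \<le> s n"
  then have "0 < (s l - x l) * (s n - x n)" using assms(4) by (simp add: mult_neg_neg)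
  moreover have "(s l - x l) * (s n - x n) \<le> 0" using antiD[OF assms(1,3,2)] assms(5) by metis
  ultimately show False by simp
qed

lemma G2': assumes "antiP R" "x \<in> R" "s \<in> R" "x l < s l" "n \<noteq> l" shows "s n \<le> x n"
proof (rule ccontr)
  assume "\<not> s n \<le> x n"
  then have "0 < (s l - x l) * (s n - x n)" using assms(4) by simp
  moreover have "(s l - x l) * (s n - x n) \<le> 0" using antiD[OF assms(1,3,2)] assms(5) by metis
  ultimately show False by simp
qed

lemma three_points:
  assumes A: "antiP R" and d: "i \<noteq> j" "i \<noteq> k" "j \<noteq> k"
    and xi: "xi \<in> R" "\<forall>l. l \<noteq> i \<longrightarrow> xi l = c l" "c i < xi i"
    and xj: "xj \<in> R" "\<forall>l. l \<noteq> j \<longrightarrow> xj l = c l" "c j < xj j"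
    and xk: "xk \<in> R" "\<forall>l. l \<noteq> k \<longrightarrow> xk l = c l" "c k < xk k"
    and s: "s \<in> R"
  shows "(\<forall>l. c l \<le> s l) \<and> (\<forall>l n. l \<noteq> n \<longrightarrow> s l = c l \<or> s n = c n)"
proof -
  have H: "False" if "x \<in> R" "\<forall>l. l \<noteq> m \<longrightarrow> x l = c l" "l \<noteq> m" "n \<noteq> m" "l \<noteq> n"
    "c l < s l" "c n < s n" for x m l n
    using G1[OF A that(1) s that(5)] that by simp
  have two_up: False if "l \<noteq> n" "c l < s l" "c n < s n" for l n
  proof -
    consider "i \<noteq> l" "i \<noteq> n" | "j \<noteq> l" "j \<noteq> n" | "k \<noteq> l" "k \<noteq> n" using d by metis
    then show False
      by cases (use H[OF xi(1,2)] H[OF xj(1,2)] H[OF xk(1,2)] that in metis)+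
  qed
  have H2: "c m < s m" if "x \<in> R" "\<forall>l. l \<noteq> m \<longrightarrow> x l = c l" "c m < x m" "s l < c l" "l \<noteq> m" for x m l
  proof -
    have "s l < x l" using that by simp
    from G2[OF A that(1) s this] that(5) have "x m \<le> s m" by metis
    then show ?thesis using that(3) by simp
  qed
  have ge: "c l \<le> s l" for l
  proof (rule ccontr)
    assume "\<not> c l \<le> s l"
    then have sl: "s l < c l" by simp
    consider "l \<noteq> i" "l \<noteq> j" | "l \<noteq> i" "l \<noteq> k" | "l \<noteq> j" "l \<noteq> k" using d by metis
    then show False
    proof cases
      case 1
      then show False using two_up[OF d(1) H2[OF xi sl] H2[OF xj sl]] by auto
    next
      case 2
      then show False using two_up[OF d(2) H2[OF xi sl] H2[OF xk sl]] by auto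
    next
      case 3
      then show False using two_up[OF d(3) H2[OF xj sl] H2[OF xk sl]] by auto
    qed
  qed
  have "s l = c l \<or> s n = c n" if "l \<noteq> n" for l n
    using two_up[OF that] ge[of l] ge[of n] by force
  then show ?thesis using ge by blast
qed

lemma find_pos:
  assumes A: "antiP R" and pqr: "p \<in> R" "q \<in> R" "r \<in> R"
    and d: "i \<noteq> j" "i \<noteq> k" "j \<noteq> k"
    and o: "p i < q i" "q j < p j" "\<forall>l. l \<noteq> i \<and> l \<noteq> j \<longrightarrow> p l = q l" "p k < r k"
  shows "\<exists>c. \<forall>s\<in>R. (\<forall>l. c l \<le> s l) \<and> (\<forall>l n. l \<noteq> n \<longrightarrow> s l = c l \<or> s n = c n)"
proof -
  define c where "c = p(j := q j)"
  have qk: "q k < r k" using o(3)[rule_format, of k] o(4) d by auto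
  have r1: "r n \<le> p n" if "n \<noteq> k" for n using G2'[OF A pqr(1,3) o(4) that] .
  have r2: "r n \<le> q n" if "n \<noteq> k" for n using G2'[OF A pqr(2,3) qk that] .
  have rj: "r j < p j" using r2[of j] d o(2) by simp
  have r3: "p n \<le> r n" if "n \<noteq> j" for n using G2[OF A pqr(1,3) rj that] .
  have ri: "r i < q i" using r3[of i] r1[of i] d o(1) by simp
  have r4: "q n \<le> r n" if "n \<noteq> i" for n using G2[OF A pqr(2,3) ri that] .
  have xr: "\<forall>l. l \<noteq> k \<longrightarrow> r l = c l"
  proof (intro allI impI)
    fix l assume "l \<noteq> k"
    then show "r l = c l" unfolding c_def
      using r1[of l] r2[of l] r3[of l] r4[of l] d by (cases "l = j") auto
  qed
  have xq: "\<forall>l. l \<noteq> i \<longrightarrow> q l = c l" unfolding c_def using o(3) by auto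
  have xp: "\<forall>l. l \<noteq> j \<longrightarrow> p l = c l" unfolding c_def by auto
  have "c i < q i" "c j < p j" "c k < r k" unfolding c_def using d o by auto
  then show ?thesis using three_points[OF A d pqr(2) xq _ pqr(1) xp _ pqr(3) xr] by blast
qed

lemma antiP_neg: "antiP R \<Longrightarrow> antiP (uminus ` R)"
  unfolding antiP_def by force

lemma struct_a:
  assumes A: "antiP R" and d: "i \<noteq> j"
    and Ti: "\<exists>p\<in>R. \<exists>q\<in>R. p i \<noteq> q i" and Tj: "\<exists>p\<in>R. \<exists>q\<in>R. p j \<noteq> q j"
  shows "\<exists>p\<in>R. \<exists>q\<in>R. \<exists>i' j'. i' \<noteq> j' \<and> p i' \<noteq> q i' \<and> p j' \<noteq> q j'"
proof -
  obtain p q where pq: "p \<in> R" "q \<in> R" "p i \<noteq> q i" using Ti by auto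
  show ?thesis
  proof (cases "\<exists>l. l \<noteq> i \<and> p l \<noteq> q l")
    case True
    then obtain l where "l \<noteq> i" "p l \<noteq> q l" by blast
    then show ?thesis using pq by blast
  next
    case False
    obtain a b where ab: "a \<in> R" "b \<in> R" "a j \<noteq> b j" using Tj by auto
    obtain r where r: "r \<in> R" "r j \<noteq> p j"
      using ab by (cases "a j = p j") auto
    show ?thesis
    proof (cases "\<exists>l. l \<noteq> j \<and> r l \<noteq> p l")
      case True
      then obtain l where "l \<noteq> j" "r l \<noteq> p l" by blast
      then show ?thesis using r pq by blast
    next
      case False2: False
      have "r i \<noteq> q i" using False2 d(1) pq(3) by auto
      moreover have "r j \<noteq> q j" using False d(1) r(2) by auto
      ultimately show ?thesis using r pq d by blast
    qed
  qed
qed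

lemma struct_b:
  assumes A: "antiP R" and pq: "p \<in> R" "q \<in> R" "i' \<noteq> j'" "p i' \<noteq> q i'" "p j' \<noteq> q j'"
  shows "\<exists>p\<in>R. \<exists>q\<in>R. \<exists>i' j'. i' \<noteq> j' \<and> p i' < q i' \<and> q j' < p j'"
proof -
  have pr: "(p i' - q i') * (p j' - q j') \<le> 0" using antiD[OF A pq(1,2,3)] .
  show ?thesis
  proof (cases "p i' < q i'")
    case True
    have "q j' < p j'"
    proof (rule ccontr)
      assume "\<not> q j' < p j'"
      then have pj: "p j' - q j' < 0" using pq(5) by simp
      have "p i' - q i' < 0" using True by simp
      moreover note pj
      ultimately have "0 < (p i' - q i') * (p j' - q j')" by (rule mult_neg_neg)
      then show False using pr by simp
    qed
    then show ?thesis using True pq by blast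
  next
    case False
    then have qi: "q i' < p i'" using pq(4) by simp
    have "p j' < q j'"
    proof (rule ccontr)
      assume "\<not> p j' < q j'"
      then have "0 < p j' - q j'" using pq(5) by simp
      moreover have "0 < p i' - q i'" using qi by simp
      ultimately have "0 < (p i' - q i') * (p j' - q j')" by simp
      then show False using pr by simp
    qed
    then show ?thesis using qi pq by blast
  qed
qed

lemma struct_oth:
  assumes A: "antiP R" and pq: "p \<in> R" "q \<in> R" "p i' < q i'" "q j' < p j'"
  shows "\<forall>l. l \<noteq> i' \<and> l \<noteq> j' \<longrightarrow> p l = q l"
proof (intro allI impI; rule ccontr)
  fix l assume l: "l \<noteq> i' \<and> l \<noteq> j'" and ne: "p l \<noteq> q l"
  show False
  proof (cases "p l < q l")
    case True
    have "i' \<noteq> l" using l by blast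
    from G1[OF A pq(1,2) this pq(3) True] show False .
  next
    case False
    then have ql: "q l < p l" using ne by simp
    have "j' \<noteq> l" using l by blast
    from G1[OF A pq(2,1) this pq(4) ql] show False .
  qed
qed

lemma neg_conv:
  fixes R :: "('d \<Rightarrow> real) set"
  assumes "\<forall>s\<in>uminus ` R. (\<forall>l. c l \<le> s l) \<and> (\<forall>l n. l \<noteq> n \<longrightarrow> s l = c l \<or> s n = c n)"
  shows "\<forall>s\<in>R. (\<forall>l. s l \<le> (- c) l) \<and> (\<forall>l n. l \<noteq> n \<longrightarrow> s l = (- c) l \<or> s n = (- c) n)"
proof
  fix s assume "s \<in> R"
  then have "- s \<in> uminus ` R" by blast
  then have h: "(\<forall>l. c l \<le> (- s) l) \<and> (\<forall>l n. l \<noteq> n \<longrightarrow> (- s) l = c l \<or> (- s) n = c n)"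
    using assms by blast
  show "(\<forall>l. s l \<le> (- c) l) \<and> (\<forall>l n. l \<noteq> n \<longrightarrow> s l = (- c) l \<or> s n = (- c) n)"
  proof (intro conjI allI impI)
    fix l :: 'd have "c l \<le> (- s) l" using h by blast
    then show "s l \<le> (- c) l" by (simp add: le_minus_iff)
  next
    fix l n :: 'd assume "l \<noteq> n"
    then have "(- s) l = c l \<or> (- s) n = c n" using h by blast
    then show "s l = (- c) l \<or> s n = (- c) n" by auto
  qed
qed

lemma struct:
  assumes A: "antiP R" and d: "i \<noteq> j" "i \<noteq> k" "j \<noteq> k"
    and T: "\<And>m. m \<in> {i, j, k} \<Longrightarrow> \<exists>p\<in>R. \<exists>q\<in>R. p m \<noteq> q m"
  shows "\<exists>c. (\<forall>s\<in>R. \<forall>l n. l \<noteq> n \<longrightarrow> s l = c l \<or> s n = c n) \<and>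
             ((\<forall>s\<in>R. \<forall>l. c l \<le> s l) \<or> (\<forall>s\<in>R. \<forall>l. s l \<le> c l))"
proof -
  have "\<exists>p\<in>R. \<exists>q\<in>R. \<exists>i' j'. i' \<noteq> j' \<and> p i' \<noteq> q i' \<and> p j' \<noteq> q j'"
    using struct_a[OF A d(1) T T] by blast
  then obtain p0 q0 i0 j0 where pq0: "p0 \<in> R" "q0 \<in> R" "i0 \<noteq> j0" "p0 i0 \<noteq> q0 i0" "p0 j0 \<noteq> q0 j0"
    by blast
  obtain p q i' j' where pq: "p \<in> R" "q \<in> R" "i' \<noteq> j'" "p i' < q i'" "q j' < p j'"
    using struct_b[OF A pq0] by blast
  have oth: "\<forall>l. l \<noteq> i' \<and> l \<noteq> j' \<longrightarrow> p l = q l" using struct_oth[OF A pq(1,2,4,5)] .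
  have "\<exists>k'. k' \<in> {i, j, k} \<and> k' \<noteq> i' \<and> k' \<noteq> j'"
  proof (cases "i \<noteq> i' \<and> i \<noteq> j'")
    case True then show ?thesis by blast
  next
    case False
    show ?thesis
    proof (cases "j \<noteq> i' \<and> j \<noteq> j'")
      case True then show ?thesis by blast
    next
      case False2: False
      have "k \<noteq> i' \<and> k \<noteq> j'" using False False2 d by blast
      then show ?thesis by blast
    qed
  qed
  then obtain k' where k': "k' \<in> {i, j, k}" "k' \<noteq> i'" "k' \<noteq> j'" by blast
  obtain a b where ab: "a \<in> R" "b \<in> R" "a k' \<noteq> b k'" using T[OF k'(1)] by blast
  obtain r where r: "r \<in> R" "r k' \<noteq> p k'"
  proof (cases "a k' = p k'")
    case True
    then have "b k' \<noteq> p k'" using ab(3) by simp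
    then show ?thesis using that[OF ab(2)] by blast
  next
    case False then show ?thesis using that[OF ab(1)] by blast
  qed
  have ki: "i' \<noteq> k'" and kj: "j' \<noteq> k'" using k' by auto
  show ?thesis
  proof (cases "p k' < r k'")
    case True
    have "\<exists>c. \<forall>s\<in>R. (\<forall>l. c l \<le> s l) \<and> (\<forall>l n. l \<noteq> n \<longrightarrow> s l = c l \<or> s n = c n)"
      using find_pos[OF A pq(1,2) r(1) pq(3) ki kj pq(4,5) oth True] .
    then obtain c where c: "\<forall>s\<in>R. (\<forall>l. c l \<le> s l) \<and> (\<forall>l n. l \<noteq> n \<longrightarrow> s l = c l \<or> s n = c n)" ..
    have c1: "\<forall>s\<in>R. \<forall>l n. l \<noteq> n \<longrightarrow> s l = c l \<or> s n = c n"
    proof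
      fix s assume s: "s \<in> R" show "\<forall>l n. l \<noteq> n \<longrightarrow> s l = c l \<or> s n = c n" using bspec[OF c s] by (rule conjunct2)
    qed
    have c2: "\<forall>s\<in>R. \<forall>l. c l \<le> s l"
    proof
      fix s assume s: "s \<in> R" show "\<forall>l. c l \<le> s l" using bspec[OF c s] by (rule conjunct1)
    qed
    show ?thesis by (rule exI[where x = c]) (rule conjI[OF c1 disjI1[OF c2]])
  next
    case False
    then have rk: "r k' < p k'" using r(2) by simp
    have A': "antiP (uminus ` R)" using antiP_neg[OF A] .
    have m: "- p \<in> uminus ` R" "- q \<in> uminus ` R" "- r \<in> uminus ` R" using pq(1,2) r(1) by auto
    have o1: "(- p) j' < (- q) j'" "(- q) i' < (- p) i'" "(- p) k' < (- r) k'"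
      using pq rk by auto
    have o2: "\<forall>l. l \<noteq> j' \<and> l \<noteq> i' \<longrightarrow> (- p) l = (- q) l" using oth by auto
    have "\<exists>c. \<forall>s\<in>uminus ` R. (\<forall>l. c l \<le> s l) \<and> (\<forall>l n. l \<noteq> n \<longrightarrow> s l = c l \<or> s n = c n)"
      using find_pos[OF A' m pq(3)[symmetric] kj ki o1(1,2) o2 o1(3)] .
    then obtain c where c: "\<forall>s\<in>uminus ` R. (\<forall>l. c l \<le> s l) \<and> (\<forall>l n. l \<noteq> n \<longrightarrow> s l = c l \<or> s n = c n)"
      ..
    have "\<forall>s\<in>R. (\<forall>l. s l \<le> (- c) l) \<and> (\<forall>l n. l \<noteq> n \<longrightarrow> s l = (- c) l \<or> s n = (- c) n)"
      using neg_conv[OF c] .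
    note cc = this
    have c1: "\<forall>s\<in>R. \<forall>l n. l \<noteq> n \<longrightarrow> s l = (- c) l \<or> s n = (- c) n"
    proof
      fix s assume s: "s \<in> R" show "\<forall>l n. l \<noteq> n \<longrightarrow> s l = (- c) l \<or> s n = (- c) n" using bspec[OF cc s] by (rule conjunct2)
    qed
    have c2: "\<forall>s\<in>R. \<forall>l. s l \<le> (- c) l"
    proof
      fix s assume s: "s \<in> R" show "\<forall>l. s l \<le> (- c) l" using bspec[OF cc s] by (rule conjunct1)
    qed
    show ?thesis by (rule exI[where x = "- c"]) (rule conjI[OF c1 disjI2[OF c2]])
  qed
qed

lemma AE_transfer:
  assumes Y: "Y \<in> borel_measurable M" and X: "X \<in> borel_measurable M"
    and d: "distr M borel Y = distr M borel X"
    and P: "{x \<in> space borel. P x} \<in> sets borel" and ae: "AE \<omega> in M. P (Y \<omega>)"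
  shows "AE \<omega> in M. P (X \<omega>)"
proof -
  have "AE x in distr M borel Y. P x" using AE_distr_iff[OF Y P] ae by simp
  then have "AE x in distr M borel X. P x" unfolding d .
  then show ?thesis using AE_distr_iff[OF X P] by simp
qed

lemma upd_meas: "(\<lambda>t. c(l := t)) \<in> borel_measurable borel" for c :: "'d \<Rightarrow> real"
proof (rule borel_measurable_continuous_onI, rule continuous_on_coordinatewise_then_product)
  fix m show "continuous_on UNIV (\<lambda>t. (c(l := t)) m)"
    by (cases "m = l") (auto intro: continuous_intros)
qed

lemma maxid: "S1 - S2 = S \<Longrightarrow> max (a + S) 0 + (max (-a) 0 + S2) = (max a 0 + S1) + max (-(a + S)) 0"
  for a S S1 S2 :: real by (auto simp: max_def)

lemma maxle: "- S \<le> S2 \<Longrightarrow> 0 \<le> S2 \<Longrightarrow> max (-(a + S)) 0 \<le> max (-a) 0 + S2"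
  for a S S2 :: real by (auto simp: max_def)

lemma ext_sum_repr:
  fixes Z :: "'d::finite \<Rightarrow> 'a \<Rightarrow> real" and u :: "'d \<Rightarrow> real \<Rightarrow> real"
  assumes P: "prob_space M" and Zm: "\<And>l. Z l \<in> borel_measurable M"
    and um: "\<And>l. u l \<in> borel_measurable borel"
    and fin: "\<And>l. (\<integral>\<^sup>+t. ennreal (max (- u l t) 0) \<partial>distr M borel (Z l)) < \<infinity>"
  shows "ext_expectation M (\<lambda>\<omega>. a + (\<Sum>l\<in>UNIV. u l (Z l \<omega>))) =
     enn2ereal (ennreal (max a 0) + (\<Sum>l\<in>UNIV. \<integral>\<^sup>+t. ennreal (max (u l t) 0) \<partial>distr M borel (Z l))) -
     enn2ereal (ennreal (max (-a) 0) + (\<Sum>l\<in>UNIV. \<integral>\<^sup>+t. ennreal (max (- u l t) 0) \<partial>distr M borel (Z l)))"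
proof -
  interpret prob_space M by fact
  note [measurable] = Zm um
  define F where "F \<omega> = a + (\<Sum>l\<in>UNIV. u l (Z l \<omega>))" for \<omega>
  define G where "G \<omega> = ennreal (max a 0) + (\<Sum>l\<in>UNIV. ennreal (max (u l (Z l \<omega>)) 0))" for \<omega>
  define H where "H \<omega> = ennreal (max (-a) 0) + (\<Sum>l\<in>UNIV. ennreal (max (- u l (Z l \<omega>)) 0))" for \<omega>
  have Fm: "F \<in> borel_measurable M" unfolding F_def by measurable
  have Gm: "G \<in> borel_measurable M" unfolding G_def by measurable
  have Hm: "H \<in> borel_measurable M" unfolding H_def by measurable
  have int: "(\<integral>\<^sup>+\<omega>. ennreal (max b 0) + (\<Sum>l\<in>UNIV. ennreal (max (v l (Z l \<omega>)) 0)) \<partial>M) =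
     ennreal (max b 0) + (\<Sum>l\<in>UNIV. \<integral>\<^sup>+t. ennreal (max (v l t) 0) \<partial>distr M borel (Z l))"
    if vm: "\<And>l. v l \<in> borel_measurable borel" for b and v :: "'d \<Rightarrow> real \<Rightarrow> real"
  proof -
    note [measurable] = vm
    have "(\<integral>\<^sup>+\<omega>. ennreal (max b 0) + (\<Sum>l\<in>UNIV. ennreal (max (v l (Z l \<omega>)) 0)) \<partial>M) =
        (\<integral>\<^sup>+\<omega>. ennreal (max b 0) \<partial>M) + (\<integral>\<^sup>+\<omega>. (\<Sum>l\<in>UNIV. ennreal (max (v l (Z l \<omega>)) 0)) \<partial>M)"
      by (rule nn_integral_add) measurable
    also have "(\<integral>\<^sup>+\<omega>. (\<Sum>l\<in>UNIV. ennreal (max (v l (Z l \<omega>)) 0)) \<partial>M) =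
        (\<Sum>l\<in>UNIV. \<integral>\<^sup>+\<omega>. ennreal (max (v l (Z l \<omega>)) 0) \<partial>M)"
      by (rule nn_integral_sum) measurable
    also have "\<dots> = (\<Sum>l\<in>UNIV. \<integral>\<^sup>+t. ennreal (max (v l t) 0) \<partial>distr M borel (Z l))"
    proof (rule sum.cong[OF refl])
      fix l
      show "(\<integral>\<^sup>+\<omega>. ennreal (max (v l (Z l \<omega>)) 0) \<partial>M) = (\<integral>\<^sup>+t. ennreal (max (v l t) 0) \<partial>distr M borel (Z l))"
        by (rule nn_integral_distr[symmetric]) measurable
    qed
    finally show ?thesis by (simp add: emeasure_space_1)
  qed
  have intG: "(\<integral>\<^sup>+\<omega>. G \<omega> \<partial>M) = ennreal (max a 0) + (\<Sum>l\<in>UNIV. \<integral>\<^sup>+t. ennreal (max (u l t) 0) \<partial>distr M borel (Z l))"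
    unfolding G_def using int[of u a] um by blast
  have intH: "(\<integral>\<^sup>+\<omega>. H \<omega> \<partial>M) = ennreal (max (-a) 0) + (\<Sum>l\<in>UNIV. \<integral>\<^sup>+t. ennreal (max (- u l t) 0) \<partial>distr M borel (Z l))"
  proof -
    have "(\<lambda>l t. - u l t) l \<in> borel_measurable borel" for l by measurable
    from int[of "\<lambda>l t. - u l t" "-a", OF this] show ?thesis unfolding H_def by simp
  qed
  have finH: "(\<integral>\<^sup>+\<omega>. H \<omega> \<partial>M) < \<infinity>"
    unfolding intH using fin by (simp add: less_top[symmetric] infinity_ennreal_def)
  have H': "H \<omega> = ennreal (max (-a) 0 + (\<Sum>l\<in>UNIV. max (- u l (Z l \<omega>)) 0))" for \<omega>
  proof -
    have "(\<Sum>l\<in>UNIV. ennreal (max (- u l (Z l \<omega>)) 0)) = ennreal (\<Sum>l\<in>UNIV. max (- u l (Z l \<omega>)) 0)"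
      by (rule sum_ennreal) simp
    then show ?thesis unfolding H_def by (subst ennreal_plus) (auto intro: sum_nonneg)
  qed
  have G': "G \<omega> = ennreal (max a 0 + (\<Sum>l\<in>UNIV. max (u l (Z l \<omega>)) 0))" for \<omega>
  proof -
    have "(\<Sum>l\<in>UNIV. ennreal (max (u l (Z l \<omega>)) 0)) = ennreal (\<Sum>l\<in>UNIV. max (u l (Z l \<omega>)) 0)"
      by (rule sum_ennreal) simp
    then show ?thesis unfolding G_def by (subst ennreal_plus) (auto intro: sum_nonneg)
  qed
  have eq: "ennreal (max (F \<omega>) 0) + H \<omega> = G \<omega> + ennreal (max (- F \<omega>) 0)" for \<omega>
  proof -
    define S1 where "S1 = (\<Sum>l\<in>UNIV. max (u l (Z l \<omega>)) 0)"
    define S2 where "S2 = (\<Sum>l\<in>UNIV. max (- u l (Z l \<omega>)) 0)"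
    define S where "S = (\<Sum>l\<in>UNIV. u l (Z l \<omega>))"
    have s: "S1 - S2 = S"
      unfolding S1_def S2_def S_def sum_subtractf[symmetric] by (rule sum.cong) auto
    have n1: "0 \<le> S1" "0 \<le> S2" unfolding S1_def S2_def by (auto intro: sum_nonneg)
    have "ennreal (max (F \<omega>) 0) + H \<omega> = ennreal (max (a + S) 0) + ennreal (max (-a) 0 + S2)"
      unfolding H' F_def S_def S2_def ..
    also have "\<dots> = ennreal (max (a + S) 0 + (max (-a) 0 + S2))"
      by (rule ennreal_plus[symmetric]) (use n1 in auto)
    also have "\<dots> = ennreal ((max a 0 + S1) + max (-(a + S)) 0)"
      by (simp only: maxid[OF s])
    also have "\<dots> = ennreal (max a 0 + S1) + ennreal (max (-(a + S)) 0)"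
      by (rule ennreal_plus) (use n1 in auto)
    also have "\<dots> = G \<omega> + ennreal (max (- F \<omega>) 0)"
      unfolding G' F_def S_def S1_def ..
    finally show ?thesis .
  qed
  have le: "ennreal (max (- F \<omega>) 0) \<le> H \<omega>" for \<omega>
  proof -
    have s: "- (\<Sum>l\<in>UNIV. u l (Z l \<omega>)) \<le> (\<Sum>l\<in>UNIV. max (- u l (Z l \<omega>)) 0)"
      unfolding sum_negf[symmetric] by (rule sum_mono) auto
    show ?thesis unfolding H' F_def
      by (rule ennreal_leI, rule maxle[OF s]) (auto intro: sum_nonneg)
  qed
  have "ext_expectation M F = enn2ereal (\<integral>\<^sup>+\<omega>. G \<omega> \<partial>M) - enn2ereal (\<integral>\<^sup>+\<omega>. H \<omega> \<partial>M)"
    by (rule ext_diff[OF Fm Gm Hm eq le finH])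
  then show ?thesis unfolding F_def[abs_def] intG intH .
qed

lemma three_elems:
  assumes "3 \<le> card A"
  obtains i j k where "i \<in> A" "j \<in> A" "k \<in> A" "i \<noteq> j" "i \<noteq> k" "j \<noteq> k"
proof -
  obtain T where T: "T \<subseteq> A" "card T = 3" "finite T" using obtain_subset_with_card_n[OF assms] by metis
  then obtain i j k where "T = {i, j, k}" "i \<noteq> j" "i \<noteq> k" "j \<noteq> k" by (auto simp: card_3_iff)
  then show ?thesis using that T(1) by auto
qed

theorem theorem7:
  fixes M :: "'a measure" and X Xct :: "'d::finite \<Rightarrow> 'a \<Rightarrow> real"
  assumes "prob_space M" and "atomless M"
    and "CARD('d) \<ge> 3"
    and "\<And>i. X i \<in> borel_measurable M"
    and "card {i. nondegenerate M (X i)} \<ge> 3"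
    and "counter_monotonic_version M Xct X"
  shows "sm_le M Xct X"
proof -
  interpret prob_space M by fact
  note Xm = assms(4)
  have Ym: "\<And>i. Xct i \<in> borel_measurable M" and cm: "counter_monotonic M Xct"
    and dist: "\<And>i. distr M borel (Xct i) = distr M borel (X i)"
    using assms(6) unfolding counter_monotonic_version_def by auto
  have "\<forall>ij. \<exists>t :: ('a \<Rightarrow> real) \<times> (real \<Rightarrow> real) \<times> (real \<Rightarrow> real). fst ij \<noteq> snd ij \<longrightarrow> (mono (fst (snd t)) \<and> mono (snd (snd t)) \<and>
      (AE \<omega> in M. Xct (fst ij) \<omega> = fst (snd t) (fst t \<omega>) \<and> - Xct (snd ij) \<omega> = snd (snd t) (fst t \<omega>)))"
  proof
    fix ij :: "'d \<times> 'd"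
    show "\<exists>t :: ('a \<Rightarrow> real) \<times> (real \<Rightarrow> real) \<times> (real \<Rightarrow> real). fst ij \<noteq> snd ij \<longrightarrow> (mono (fst (snd t)) \<and> mono (snd (snd t)) \<and>
      (AE \<omega> in M. Xct (fst ij) \<omega> = fst (snd t) (fst t \<omega>) \<and> - Xct (snd ij) \<omega> = snd (snd t) (fst t \<omega>)))"
    proof (cases "fst ij = snd ij")
      case True then show ?thesis by blast
    next
      case False
      then have "counter_monotonic_pair M (Xct (fst ij)) (Xct (snd ij))"
        using cm unfolding counter_monotonic_def by blast
      then obtain Z0 :: "'a \<Rightarrow> real" and f0 g0 :: "real \<Rightarrow> real" where zfg0:
        "mono f0" "mono g0" "AE \<omega> in M. Xct (fst ij) \<omega> = f0 (Z0 \<omega>) \<and> - Xct (snd ij) \<omega> = g0 (Z0 \<omega>)"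
        unfolding counter_monotonic_pair_def comonotonic_def by blast
      show ?thesis apply (rule exI[where x = "(Z0, f0, g0)"]) using zfg0 by simp
    qed
  qed
  then have "\<exists>T :: 'd \<times> 'd \<Rightarrow> ('a \<Rightarrow> real) \<times> (real \<Rightarrow> real) \<times> (real \<Rightarrow> real). \<forall>ij. fst ij \<noteq> snd ij \<longrightarrow> (mono (fst (snd (T ij))) \<and> mono (snd (snd (T ij))) \<and>
      (AE \<omega> in M. Xct (fst ij) \<omega> = fst (snd (T ij)) (fst (T ij) \<omega>) \<and> - Xct (snd ij) \<omega> = snd (snd (T ij)) (fst (T ij) \<omega>)))"
    by (rule choice)
  then obtain T :: "'d \<times> 'd \<Rightarrow> ('a \<Rightarrow> real) \<times> (real \<Rightarrow> real) \<times> (real \<Rightarrow> real)" where T: "\<forall>ij. fst ij \<noteq> snd ij \<longrightarrow> (mono (fst (snd (T ij))) \<and> mono (snd (snd (T ij))) \<and>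
      (AE \<omega> in M. Xct (fst ij) \<omega> = fst (snd (T ij)) (fst (T ij) \<omega>) \<and> - Xct (snd ij) \<omega> = snd (snd (T ij)) (fst (T ij) \<omega>)))"
    ..
  define Z where "Z i j = fst (T (i, j))" for i j
  define f where "f i j = fst (snd (T (i, j)))" for i j
  define g where "g i j = snd (snd (T (i, j)))" for i j
  have Zfg: "mono (f i j) \<and> mono (g i j) \<and> (AE \<omega> in M. Xct i \<omega> = f i j (Z i j \<omega>) \<and> - Xct j \<omega> = g i j (Z i j \<omega>))"
    if "i \<noteq> j" for i j
    using T[rule_format, of "(i, j)"] that unfolding Z_def f_def g_def by simp
  define Q where "Q \<omega> \<longleftrightarrow> (\<forall>i j. i \<noteq> j \<longrightarrow> Xct i \<omega> = f i j (Z i j \<omega>) \<and> - Xct j \<omega> = g i j (Z i j \<omega>))" for \<omega>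
  have AEQ: "AE \<omega> in M. Q \<omega>"
    unfolding Q_def
  proof (intro eventually_all_finite)
    fix i j :: 'd
    show "AE \<omega> in M. i \<noteq> j \<longrightarrow> Xct i \<omega> = f i j (Z i j \<omega>) \<and> - Xct j \<omega> = g i j (Z i j \<omega>)"
    proof (cases "i = j")
      case True then show ?thesis by simp
    next
      case False
      then show ?thesis using Zfg[OF False] by (auto elim: eventually_mono)
    qed
  qed
  define S0 where "S0 = {\<omega> \<in> space M. Q \<omega>}"
  define R where "R = (\<lambda>\<omega>. \<lambda>l. Xct l \<omega>) ` S0"
  have inR: "(\<lambda>l. Xct l \<omega>) \<in> R" if "\<omega> \<in> space M" "Q \<omega>" for \<omega>
    unfolding R_def S0_def using that by blast
  have anti: "antiP R"
    unfolding antiP_def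
  proof (intro ballI allI impI)
    fix p q i j assume p: "p \<in> R" and q: "q \<in> R" and ij: "(i::'d) \<noteq> j"
    obtain \<omega> where \<omega>: "Q \<omega>" "p = (\<lambda>l. Xct l \<omega>)" using p unfolding R_def S0_def by blast
    obtain \<omega>' where \<omega>': "Q \<omega>'" "q = (\<lambda>l. Xct l \<omega>')" using q unfolding R_def S0_def by blast
    have e: "Xct i \<omega> = f i j (Z i j \<omega>)" "Xct j \<omega> = - g i j (Z i j \<omega>)"
      "Xct i \<omega>' = f i j (Z i j \<omega>')" "Xct j \<omega>' = - g i j (Z i j \<omega>')"
      using \<omega>(1) \<omega>'(1) ij unfolding Q_def by (metis minus_minus)+
    have m: "mono (f i j)" "mono (g i j)" using Zfg[OF ij] by auto
    have "0 \<le> (f i j (Z i j \<omega>) - f i j (Z i j \<omega>')) * (g i j (Z i j \<omega>) - g i j (Z i j \<omega>'))"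
      by (rule mono_prod[OF m])
    then show "(p i - q i) * (p j - q j) \<le> 0"
      unfolding \<omega>(2) \<omega>'(2) using e by (simp add: algebra_simps)
  qed
  have ex0: "\<exists>\<omega>. \<omega> \<in> space M \<and> Q \<omega>"
  proof (rule ccontr)
    assume n: "\<not> (\<exists>\<omega>. \<omega> \<in> space M \<and> Q \<omega>)"
    from AEQ AE_space have "AE \<omega> in M. False"
      by eventually_elim (use n in blast)
    then show False using AE_False by simp
  qed
  then obtain \<omega>0 where \<omega>0: "\<omega>0 \<in> space M" "Q \<omega>0" by blast
  have TR: "\<exists>p\<in>R. \<exists>q\<in>R. p m \<noteq> q m" if nd: "nondegenerate M (X m)" for m
  proof (rule ccontr)
    assume n: "\<not> (\<exists>p\<in>R. \<exists>q\<in>R. p m \<noteq> q m)"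
    from AEQ AE_space have "AE \<omega> in M. Xct m \<omega> = Xct m \<omega>0"
    proof eventually_elim
      case (elim \<omega>)
      have nn: "\<forall>p\<in>R. \<forall>q\<in>R. p m = q m" using n by blast
      have "(\<lambda>l. Xct l \<omega>) m = (\<lambda>l. Xct l \<omega>0) m"
        using bspec[OF bspec[OF nn inR[OF elim(2) elim(1)]] inR[OF \<omega>0]] .
      then show ?case by simp
    qed
    then have "AE \<omega> in M. X m \<omega> = Xct m \<omega>0"
      by (rule AE_transfer[OF Ym Xm dist, where P = "\<lambda>x. x = Xct m \<omega>0", rotated]) simp
    then show False using nd unfolding nondegenerate_def by blast
  qed
  obtain i j k where ijk0: "i \<in> {i. nondegenerate M (X i)}" "j \<in> {i. nondegenerate M (X i)}"
    "k \<in> {i. nondegenerate M (X i)}" "i \<noteq> j" "i \<noteq> k" "j \<noteq> k"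
    by (rule three_elems[OF assms(5)])
  have ijk: "nondegenerate M (X i)" "nondegenerate M (X j)" "nondegenerate M (X k)"
    "i \<noteq> j" "i \<noteq> k" "j \<noteq> k" using ijk0 by simp_all
  have T3: "\<exists>p\<in>R. \<exists>q\<in>R. p m \<noteq> q m" if "m \<in> {i, j, k}" for m
  proof -
    have "m = i \<or> m = j \<or> m = k" using that by simp
    then show ?thesis using TR ijk(1,2,3) by (elim disjE) simp_all
  qed
  obtain c where cc: "(\<forall>s\<in>R. \<forall>l n. l \<noteq> n \<longrightarrow> s l = c l \<or> s n = c n) \<and>
    ((\<forall>s\<in>R. \<forall>l. c l \<le> s l) \<or> (\<forall>s\<in>R. \<forall>l. s l \<le> c l))"
    using struct[OF anti ijk(4,5,6) T3] ..
  note c1 = conjunct1[OF cc] and c2 = conjunct2[OF cc]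
  have AE_one: "AE \<omega> in M. \<forall>l n. l \<noteq> n \<longrightarrow> Xct l \<omega> = c l \<or> Xct n \<omega> = c n"
    using AEQ AE_space
  proof eventually_elim
    case (elim \<omega>)
    show ?case using bspec[OF c1 inR[OF elim(2) elim(1)]] by simp
  qed
  have AE_ordX: "AE \<omega> in M. (\<forall>l. c l \<le> X l \<omega>) \<or> (\<forall>l. X l \<omega> \<le> c l)"
  proof (cases "\<forall>s\<in>R. \<forall>l. c l \<le> s l")
    case True
    have "AE \<omega> in M. c l \<le> X l \<omega>" for l
    proof -
      from AEQ AE_space have "AE \<omega> in M. c l \<le> Xct l \<omega>"
      proof eventually_elim
        case (elim \<omega>)
        show ?case using bspec[OF True inR[OF elim(2) elim(1)]] by simp
      qed
      then show ?thesis
        by (rule AE_transfer[OF Ym Xm dist, where P = "\<lambda>x. c l \<le> x", rotated]) simp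
    qed
    then have "AE \<omega> in M. \<forall>l. c l \<le> X l \<omega>" by (rule eventually_all_finite)
    then show ?thesis by (auto elim: eventually_mono)
  next
    case False
    then have F: "\<forall>s\<in>R. \<forall>l. s l \<le> c l" using c2 by blast
    have "AE \<omega> in M. X l \<omega> \<le> c l" for l
    proof -
      from AEQ AE_space have "AE \<omega> in M. Xct l \<omega> \<le> c l"
      proof eventually_elim
        case (elim \<omega>)
        show ?case using bspec[OF F inR[OF elim(2) elim(1)]] by simp
      qed
      then show ?thesis
        by (rule AE_transfer[OF Ym Xm dist, where P = "\<lambda>x. x \<le> c l", rotated]) simp
    qed
    then have "AE \<omega> in M. \<forall>l. X l \<omega> \<le> c l" by (rule eventually_all_finite)
    then show ?thesis by (auto elim: eventually_mono)
  qed
  show ?thesis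
    unfolding sm_le_def
  proof (intro allI impI, elim conjE)
    fix \<phi> :: "('d \<Rightarrow> real) \<Rightarrow> real"
    assume sm: "supermodular \<phi>" and \<phi>m: "\<phi> \<in> borel_measurable borel"
      and wdY: "exp_well_defined M (\<lambda>\<omega>. \<phi> (\<lambda>i. Xct i \<omega>))"
      and wdX: "exp_well_defined M (\<lambda>\<omega>. \<phi> (\<lambda>i. X i \<omega>))"
    define u where "u = (\<lambda>l t. \<phi> (c(l := t)) - \<phi> c)"
    define a where "a = \<phi> c"
    have um: "u l \<in> borel_measurable borel" for l
      unfolding u_def using measurable_compose[OF upd_meas \<phi>m] by simp
    have u0: "u l (c l) = 0" for l unfolding u_def by simp
    have hX: "AE \<omega> in M. a + (\<Sum>l\<in>UNIV. u l (X l \<omega>)) \<le> \<phi> (\<lambda>i. X i \<omega>)"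
      using AE_ordX
    proof eventually_elim
      case (elim \<omega>)
      show ?case using sm_sum[OF sm elim] unfolding u_def a_def by simp
    qed
    have hY: "AE \<omega> in M. \<phi> (\<lambda>i. Xct i \<omega>) = a + (\<Sum>l\<in>UNIV. u l (Xct l \<omega>))"
      using AE_one
    proof eventually_elim
      case (elim \<omega>)
      show ?case using sm_eq[OF elim, of \<phi>] unfolding u_def a_def by simp
    qed
    show "ext_expectation M (\<lambda>\<omega>. \<phi> (\<lambda>i. Xct i \<omega>)) \<le> ext_expectation M (\<lambda>\<omega>. \<phi> (\<lambda>i. X i \<omega>))"
    proof (cases "(\<integral>\<^sup>+\<omega>. ennreal (max (- \<phi> (\<lambda>i. Xct i \<omega>)) 0) \<partial>M) < \<infinity>")
      case False
      then have Pf: "(\<integral>\<^sup>+\<omega>. ennreal (max (\<phi> (\<lambda>i. Xct i \<omega>)) 0) \<partial>M) < \<infinity>"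
        using wdY unfolding exp_well_defined_def by blast
      have Ninf: "(\<integral>\<^sup>+\<omega>. ennreal (max (- \<phi> (\<lambda>i. Xct i \<omega>)) 0) \<partial>M) = \<infinity>"
        using False by (simp add: not_less top_unique infinity_ennreal_def)
      obtain r where r: "enn2ereal (\<integral>\<^sup>+\<omega>. ennreal (max (\<phi> (\<lambda>i. Xct i \<omega>)) 0) \<partial>M) = ereal r"
        using Pf by (cases "enn2ereal (\<integral>\<^sup>+\<omega>. ennreal (max (\<phi> (\<lambda>i. Xct i \<omega>)) 0) \<partial>M)")
          (auto simp: infinity_ennreal_def)
      have "ext_expectation M (\<lambda>\<omega>. \<phi> (\<lambda>i. Xct i \<omega>)) = - \<infinity>"
        unfolding ext_expectation_def r Ninf by (simp add: infinity_ennreal_def)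
      then show ?thesis by simp
    next
      case True
      define hY where "hY \<omega> = a + (\<Sum>l\<in>UNIV. u l (Xct l \<omega>))" for \<omega>
      have hYm: "hY \<in> borel_measurable M"
        unfolding hY_def using Ym um by measurable
      have NY: "(\<integral>\<^sup>+\<omega>. ennreal (max (- hY \<omega>) 0) \<partial>M) = (\<integral>\<^sup>+\<omega>. ennreal (max (- \<phi> (\<lambda>i. Xct i \<omega>)) 0) \<partial>M)"
        using hY unfolding hY_def by (intro nn_integral_cong_AE) (auto elim: eventually_mono)
      have finY: "(\<integral>\<^sup>+t. ennreal (max (- u l t) 0) \<partial>distr M borel (Xct l)) < \<infinity>" for l
      proof -
        have "(\<integral>\<^sup>+t. ennreal (max (- u l t) 0) \<partial>distr M borel (Xct l)) =
            (\<integral>\<^sup>+\<omega>. ennreal (max (- u l (Xct l \<omega>)) 0) \<partial>M)"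
        proof (rule nn_integral_distr[OF Ym])
          note um_m[measurable] = um
          show "(\<lambda>t. ennreal (max (- u l t) 0)) \<in> borel_measurable (distr M borel (Xct l))"
            unfolding measurable_distr_eq1 by measurable
        qed
        also have "\<dots> \<le> (\<integral>\<^sup>+\<omega>. ennreal (max (- hY \<omega>) 0) + ennreal \<bar>a\<bar> \<partial>M)"
          using AE_one
        proof (intro nn_integral_mono_AE, eventually_elim)
          case (elim \<omega>)
          have "max (- u l (Xct l \<omega>)) 0 \<le> max (- hY \<omega>) 0 + \<bar>a\<bar>"
            unfolding hY_def by (rule neg_bound[of "\<lambda>l. Xct l \<omega>" c u, OF _ u0]) (use elim in auto)
          then have "ennreal (max (- u l (Xct l \<omega>)) 0) \<le> ennreal (max (- hY \<omega>) 0 + \<bar>a\<bar>)"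
            by (rule ennreal_leI)
          then show ?case by (simp add: ennreal_plus)
        qed
        also have "\<dots> = (\<integral>\<^sup>+\<omega>. ennreal (max (- hY \<omega>) 0) \<partial>M) + ennreal \<bar>a\<bar>"
          using hYm by (subst nn_integral_add) (auto simp: emeasure_space_1)
        also have "\<dots> < \<infinity>" using True NY by (simp add: infinity_ennreal_def)
        finally show ?thesis .
      qed
      have finX: "(\<integral>\<^sup>+t. ennreal (max (- u l t) 0) \<partial>distr M borel (X l)) < \<infinity>" for l
        using finY[of l] unfolding dist .
      have "ext_expectation M (\<lambda>\<omega>. \<phi> (\<lambda>i. Xct i \<omega>)) = ext_expectation M (\<lambda>\<omega>. a + (\<Sum>l\<in>UNIV. u l (Xct l \<omega>)))"
        by (rule ext_cong_AE[OF hY])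
      also have "\<dots> = enn2ereal (ennreal (max a 0) + (\<Sum>l\<in>UNIV. \<integral>\<^sup>+t. ennreal (max (u l t) 0) \<partial>distr M borel (Xct l))) -
          enn2ereal (ennreal (max (-a) 0) + (\<Sum>l\<in>UNIV. \<integral>\<^sup>+t. ennreal (max (- u l t) 0) \<partial>distr M borel (Xct l)))"
        by (rule ext_sum_repr[OF assms(1) Ym um finY])
      also have "\<dots> = enn2ereal (ennreal (max a 0) + (\<Sum>l\<in>UNIV. \<integral>\<^sup>+t. ennreal (max (u l t) 0) \<partial>distr M borel (X l))) -
          enn2ereal (ennreal (max (-a) 0) + (\<Sum>l\<in>UNIV. \<integral>\<^sup>+t. ennreal (max (- u l t) 0) \<partial>distr M borel (X l)))"
        unfolding dist ..
      also have "\<dots> = ext_expectation M (\<lambda>\<omega>. a + (\<Sum>l\<in>UNIV. u l (X l \<omega>)))"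
        by (rule ext_sum_repr[OF assms(1) Xm um finX, symmetric])
      also have "\<dots> \<le> ext_expectation M (\<lambda>\<omega>. \<phi> (\<lambda>i. X i \<omega>))"
        by (rule ext_mono[OF hX])
      finally show ?thesis .
    qed
  qed
qed


end
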